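(* Let $\gamma_o:\mathbb{R}\to{\rm AdS}$ be a closed (periodic) null curve satisfying the standing assumptions, whose bending $\kappa_o$ is periodic with period $\rho>0$. Let $I\ni0$ be an open interval and let $\kappa:\mathbb{R}\times I\to\mathbb{R}$ be a solution of the KdV equation $\partial_t\kappa+\partial_s^3\kappa-6\kappa\partial_s\kappa=0$ with $\kappa(s,0)=\kappa_o(s)$ such that $\kappa(s+\rho,t)=\kappa(s,t)$ for all $(s,t)$. Let $\gamma:\mathbb{R}\times I\to{\rm AdS}$ be a solution of the LIEN flow $\partial_t\gamma=-2\sqrt2(\kappa T+2B)$ with bending $\kappa$ and $\gamma(s,0)=\gamma_o(s)$. Then, for every $t\in I$, the curve $s\mapsto\gamma(s,t)$ is periodic; indeed the monodromy $t\mapsto\mathcal{F}(\rho,t)\mathcal{F}(0,t)^{-1}$ of the Cartan frame field is constant in $t$.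
   Context: ${\rm AdS}={\rm SL}(2,\mathbb{R})$ with the Lorentzian metric induced by $\langle\cdot,\cdot\rangle$, the polarization of $q(X)=-\det X$ on $2\times2$ real matrices. Null curves are assumed future-directed, without inflection points, parametrized by proper time ($\langle\gamma'',\gamma''\rangle=4$). Bending $\kappa=-\frac1{16}\langle\gamma''',\gamma'''\rangle$; $T=\gamma'/\sqrt2$, $N=\gamma''/2$, $B=\frac1{\sqrt2}\kappa\gamma'-\frac1{2\sqrt2}\gamma'''$. The Cartan frame field is $\mathcal{F}=(\gamma,T,N,B)$, viewed as a map into $4$-tuples of matrices (acting linearly on $\mathbb{R}^{2,2}$ via its coordinates in this basis). A solution of the LIEN flow is a smooth one-parameter family $\gamma(s,t)$ of such null curves (each parametrized by proper time $s$) satisfying $\partial_t\gamma=-2\sqrt2(\kappa T+2B)$. *)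

theory Defs
  imports "HOL-Analysis.Analysis"
begin

type_synonym mat2 = "real^2^2"

definition adsq :: "mat2 \<Rightarrow> real" where
  "adsq X = - det X"

definition ads_inner :: "mat2 \<Rightarrow> mat2 \<Rightarrow> real" where
  "ads_inner X Y = (adsq (X + Y) - adsq X - adsq Y) / 2"

definition in_AdS :: "mat2 \<Rightarrow> bool" where
  "in_AdS X \<longleftrightarrow> det X = 1"

text \<open>Time orientation: the left-invariant timelike vector field X J,
  with J the rotation by a right angle. A tangent vector V at X is future-directed
  if ads_inner V (X J) < 0 (convention).\<close>
definition Jmat :: mat2 where
  "Jmat = (\<chi> i j. if i = 1 \<and> j = 2 then -1 else if i = 2 \<and> j = 1 then 1 else 0)"

definition future_directed :: "mat2 \<Rightarrow> mat2 \<Rightarrow> bool" where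
  "future_directed X V \<longleftrightarrow> ads_inner V (X ** Jmat) < 0"

definition vderiv :: "(real \<Rightarrow> 'a::real_normed_vector) \<Rightarrow> real \<Rightarrow> 'a" where
  "vderiv c = (\<lambda>s. vector_derivative c (at s))"

definition nderiv :: "nat \<Rightarrow> (real \<Rightarrow> 'a::real_normed_vector) \<Rightarrow> real \<Rightarrow> 'a" where
  "nderiv n c = (vderiv ^^ n) c"

definition smooth_curve :: "(real \<Rightarrow> 'a::real_normed_vector) \<Rightarrow> bool" where
  "smooth_curve c \<longleftrightarrow> (\<forall>n s. (nderiv n c has_vector_derivative nderiv (Suc n) c s) (at s))"

definition bending :: "(real \<Rightarrow> mat2) \<Rightarrow> real \<Rightarrow> real" where
  "bending c s = - (1/16) * ads_inner (nderiv 3 c s) (nderiv 3 c s)"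

text \<open>Smooth, future-directed null curve in AdS without inflection points,
  parametrized by proper time.\<close>
definition proper_null_curve :: "(real \<Rightarrow> mat2) \<Rightarrow> bool" where
  "proper_null_curve c \<longleftrightarrow> smooth_curve c \<and>
     (\<forall>s. in_AdS (c s) \<and> nderiv 1 c s \<noteq> 0 \<and>
          ads_inner (nderiv 1 c s) (nderiv 1 c s) = 0 \<and>
          future_directed (c s) (nderiv 1 c s) \<and>
          ads_inner (nderiv 2 c s) (nderiv 2 c s) = 4)"

definition frameT :: "(real \<Rightarrow> mat2) \<Rightarrow> real \<Rightarrow> mat2" where
  "frameT c s = (1 / sqrt 2) *\<^sub>R nderiv 1 c s"

definition frameN :: "(real \<Rightarrow> mat2) \<Rightarrow> real \<Rightarrow> mat2" where
  "frameN c s = (1 / 2) *\<^sub>R nderiv 2 c s"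

definition frameB :: "(real \<Rightarrow> mat2) \<Rightarrow> real \<Rightarrow> mat2" where
  "frameB c s = ((1 / sqrt 2) * bending c s) *\<^sub>R nderiv 1 c s
               - (1 / (2 * sqrt 2)) *\<^sub>R nderiv 3 c s"

definition mcoords :: "mat2 \<Rightarrow> real^4" where
  "mcoords X = (\<chi> k. if k = 1 then X$1$1 else if k = 2 then X$1$2
                      else if k = 3 then X$2$1 else X$2$2)"

definition cartan_frame :: "(real \<Rightarrow> mat2) \<Rightarrow> real \<Rightarrow> real^4^4" where
  "cartan_frame c s = (\<chi> i j. mcoords
      (if j = 1 then c s else if j = 2 then frameT c s
       else if j = 3 then frameN c s else frameB c s) $ i)"

definition monodromy :: "(real \<Rightarrow> mat2) \<Rightarrow> real \<Rightarrow> real^4^4" where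
  "monodromy c \<rho> = cartan_frame c \<rho> ** matrix_inv (cartan_frame c 0)"

definition pd_s :: "(real \<Rightarrow> real \<Rightarrow> 'a::real_normed_vector) \<Rightarrow> real \<Rightarrow> real \<Rightarrow> 'a" where
  "pd_s f = (\<lambda>s t. vector_derivative (\<lambda>x. f x t) (at s))"

definition pd_t :: "(real \<Rightarrow> real \<Rightarrow> 'a::real_normed_vector) \<Rightarrow> real \<Rightarrow> real \<Rightarrow> 'a" where
  "pd_t f = (\<lambda>s t. vector_derivative (\<lambda>y. f s y) (at t))"

text \<open>C^infinity on R x I: all iterated partial derivatives exist and are continuous.\<close>
definition smooth2 :: "real set \<Rightarrow> (real \<Rightarrow> real \<Rightarrow> 'a::real_normed_vector) \<Rightarrow> bool" where
  "smooth2 I f \<longleftrightarrow> (\<forall>ops :: bool list.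
     let g = foldr (\<lambda>b h. if b then pd_s h else pd_t h) ops f in
       continuous_on (UNIV \<times> I) (\<lambda>(s, t). g s t) \<and>
       (\<forall>s. \<forall>t\<in>I. ((\<lambda>x. g x t) has_vector_derivative pd_s g s t) (at s) \<and>
                   ((\<lambda>y. g s y) has_vector_derivative pd_t g s t) (at t)))"

definition KdV_solution :: "real set \<Rightarrow> (real \<Rightarrow> real \<Rightarrow> real) \<Rightarrow> bool" where
  "KdV_solution I k \<longleftrightarrow> smooth2 I k \<and>
     (\<forall>s. \<forall>t\<in>I. pd_t k s t + pd_s (pd_s (pd_s k)) s t - 6 * k s t * pd_s k s t = 0)"

definition LIEN_solution :: "real set \<Rightarrow> (real \<Rightarrow> real \<Rightarrow> mat2) \<Rightarrow> bool" where
  "LIEN_solution I g \<longleftrightarrow> smooth2 I g \<and>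
     (\<forall>t\<in>I. proper_null_curve (\<lambda>s. g s t)) \<and>
     (\<forall>s. \<forall>t\<in>I. pd_t g s t =
        (- 2 * sqrt 2) *\<^sub>R (bending (\<lambda>x. g x t) s *\<^sub>R frameT (\<lambda>x. g x t) s
                            + 2 *\<^sub>R frameB (\<lambda>x. g x t) s))"

end

theory Submission imports Defs "HOL-Analysis.Analysis" begin

lemma ads_inner_expl:
  "ads_inner X Y = (-1/2) * (X$1$1*Y$2$2 + X$2$2*Y$1$1 - X$1$2*Y$2$1 - X$2$1*Y$1$2)"
  unfolding ads_inner_def adsq_def det_2 by (simp add: field_simps)

lemma comp_le: "\<bar>(X::mat2)$i$j\<bar> \<le> norm X"
  using Finite_Cartesian_Product.norm_nth_le[of "X$i" j] Finite_Cartesian_Product.norm_nth_le[of X i] by simp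

lemma bb_ads: "bounded_bilinear ads_inner"
proof
  fix a a' b b' :: mat2 and r :: real
  show "ads_inner (a + a') b = ads_inner a b + ads_inner a' b"
    "ads_inner a (b + b') = ads_inner a b + ads_inner a b'"
    "ads_inner (r *\<^sub>R a) b = r *\<^sub>R ads_inner a b"
    "ads_inner a (r *\<^sub>R b) = r *\<^sub>R ads_inner a b"
    by (simp_all add: ads_inner_expl algebra_simps)
next
  show "\<exists>K. \<forall>a b. norm (ads_inner a b) \<le> norm a * norm b * K"
  proof (intro exI allI)
    fix a b :: mat2
    have h: "\<bar>a$i$j * b$k$l\<bar> \<le> norm a * norm b" for i j k l
      by (simp add: abs_mult mult_mono comp_le)
    have "\<bar>a$1$1*b$2$2 + a$2$2*b$1$1 - a$1$2*b$2$1 - a$2$1*b$1$2\<bar> \<le> 4 * (norm a * norm b)"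
      using h[of 1 1 2 2] h[of 2 2 1 1] h[of 1 2 2 1] h[of 2 1 1 2] by linarith
    then show "norm (ads_inner a b) \<le> norm a * norm b * 2"
      unfolding ads_inner_expl real_norm_def abs_mult by simp
  qed
qed


lemma ads_sym: "ads_inner X Y = ads_inner Y X"
  by (simp add: ads_inner_expl algebra_simps)

lemmas ads_add_left = bounded_bilinear.add_left[OF bb_ads]
lemmas ads_add_right = bounded_bilinear.add_right[OF bb_ads]
lemmas ads_diff_left = bounded_bilinear.diff_left[OF bb_ads]
lemmas ads_diff_right = bounded_bilinear.diff_right[OF bb_ads]
lemmas ads_scaleR_left = bounded_bilinear.scaleR_left[OF bb_ads]
lemmas ads_scaleR_right = bounded_bilinear.scaleR_right[OF bb_ads]
lemmas ads_zero_left = bounded_bilinear.zero_left[OF bb_ads]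
lemmas ads_zero_right = bounded_bilinear.zero_right[OF bb_ads]
lemmas ads_minus_left = bounded_bilinear.minus_left[OF bb_ads]
lemmas ads_minus_right = bounded_bilinear.minus_right[OF bb_ads]
lemmas ads_lin = ads_add_left ads_add_right ads_diff_left ads_diff_right
  ads_scaleR_left ads_scaleR_right ads_zero_left ads_zero_right ads_minus_left ads_minus_right

lemma ads_self: "ads_inner X X = - det X"
  by (simp add: ads_inner_expl det_2 algebra_simps)

lemma ads_deriv:
  assumes "(f has_vector_derivative f') (at s)" "(g has_vector_derivative g') (at s)"
  shows "((\<lambda>x. ads_inner (f x) (g x)) has_real_derivative
           (ads_inner (f s) g' + ads_inner f' (g s))) (at s)"
  using bounded_bilinear.has_vector_derivative[OF bb_ads assms]
  by (simp add: has_real_derivative_iff_has_vector_derivative)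

lemma deriv_const0:
  assumes "\<forall>x. f x = (a::real)" "(f has_real_derivative d) (at s)"
  shows "d = 0"
proof -
  have "f = (\<lambda>_. a)" using assms(1) by auto
  then show ?thesis using assms(2) DERIV_const DERIV_unique by metis
qed

lemma proper_smooth:
  "proper_null_curve c \<Longrightarrow> (nderiv n c has_vector_derivative nderiv (Suc n) c s) (at s)"
  unfolding proper_null_curve_def smooth_curve_def by blast

lemma gram_step:
  assumes "proper_null_curve c" "\<forall>x. ads_inner (nderiv i c x) (nderiv j c x) = a"
  shows "ads_inner (nderiv i c s) (nderiv (Suc j) c s) + ads_inner (nderiv (Suc i) c s) (nderiv j c s) = 0"
  using deriv_const0[OF assms(2) ads_deriv[OF proper_smooth[OF assms(1)] proper_smooth[OF assms(1)]]] .

definition kd :: "(real \<Rightarrow> mat2) \<Rightarrow> real \<Rightarrow> real" where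
  "kd c s = -(1/8) * ads_inner (nderiv 3 c s) (nderiv 4 c s)"

lemma bending_deriv:
  assumes "proper_null_curve c"
  shows "(bending c has_real_derivative kd c s) (at s)"
proof -
  have "((\<lambda>x. -(1/16) * ads_inner (nderiv 3 c x) (nderiv 3 c x)) has_real_derivative
     -(1/16) * (ads_inner (nderiv 3 c s) (nderiv 4 c s) + ads_inner (nderiv 4 c s) (nderiv 3 c s))) (at s)"
    by (intro DERIV_cmult ads_deriv) (use proper_smooth[OF assms, of 3] in \<open>simp_all add: numeral_eq_Suc\<close>)
  then show ?thesis unfolding kd_def bending_def[abs_def]
    by (simp add: ads_sym[of "nderiv 4 c s"])
qed

lemma gram:
  assumes pc: "proper_null_curve c"
  shows "ads_inner (nderiv 0 c s) (nderiv 0 c s) = -1"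
    "ads_inner (nderiv 0 c s) (nderiv 1 c s) = 0"
    "ads_inner (nderiv 0 c s) (nderiv 2 c s) = 0"
    "ads_inner (nderiv 0 c s) (nderiv 3 c s) = 0"
    "ads_inner (nderiv 1 c s) (nderiv 1 c s) = 0"
    "ads_inner (nderiv 1 c s) (nderiv 2 c s) = 0"
    "ads_inner (nderiv 1 c s) (nderiv 3 c s) = -4"
    "ads_inner (nderiv 2 c s) (nderiv 2 c s) = 4"
    "ads_inner (nderiv 2 c s) (nderiv 3 c s) = 0"
    "ads_inner (nderiv 3 c s) (nderiv 3 c s) = -16 * bending c s"
    "ads_inner (nderiv 0 c s) (nderiv 4 c s) = 4"
    "ads_inner (nderiv 1 c s) (nderiv 4 c s) = 0"
    "ads_inner (nderiv 2 c s) (nderiv 4 c s) = 16 * bending c s"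
    "ads_inner (nderiv 3 c s) (nderiv 4 c s) = -8 * kd c s"
proof -
  have n0: "nderiv 0 c = c" by (simp add: nderiv_def)
  have g00: "\<forall>x. ads_inner (nderiv 0 c x) (nderiv 0 c x) = -1"
    using pc by (simp add: n0 ads_self proper_null_curve_def in_AdS_def)
  have g11: "\<forall>x. ads_inner (nderiv 1 c x) (nderiv 1 c x) = 0"
    using pc by (simp add: proper_null_curve_def)
  have g22: "\<forall>x. ads_inner (nderiv 2 c x) (nderiv 2 c x) = 4"
    using pc by (simp add: proper_null_curve_def)
  have g01: "\<forall>x. ads_inner (nderiv 0 c x) (nderiv 1 c x) = 0"
    using gram_step[OF pc g00] by (simp add: ads_sym[of "nderiv (Suc 0) c _"])
  have g12: "\<forall>x. ads_inner (nderiv 1 c x) (nderiv 2 c x) = 0"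
    using gram_step[OF pc g11] by (simp add: ads_sym numeral_2_eq_2)
  have g23: "\<forall>x. ads_inner (nderiv 2 c x) (nderiv 3 c x) = 0"
    using gram_step[OF pc g22] by (simp add: ads_sym numeral_3_eq_3 numeral_2_eq_2)
  have g02: "\<forall>x. ads_inner (nderiv 0 c x) (nderiv 2 c x) = 0"
    using gram_step[OF pc g01] g11 by (simp add: numeral_2_eq_2)
  have g03: "\<forall>x. ads_inner (nderiv 0 c x) (nderiv 3 c x) = 0"
    using gram_step[OF pc g02] g12 by (simp add: numeral_3_eq_3 numeral_2_eq_2)
  have g13: "\<forall>x. ads_inner (nderiv 1 c x) (nderiv 3 c x) = -4"
  proof
    fix x show "ads_inner (nderiv 1 c x) (nderiv 3 c x) = -4"
      using gram_step[OF pc g12, where s=x] g22 by (simp add: numeral_3_eq_3 numeral_2_eq_2 algebra_simps)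
  qed
  have g04: "\<forall>x. ads_inner (nderiv 0 c x) (nderiv 4 c x) = 4"
  proof
    fix x show "ads_inner (nderiv 0 c x) (nderiv 4 c x) = 4"
      using gram_step[OF pc g03, where s=x] g13 by (simp add: numeral_3_eq_3 numeral_2_eq_2 eval_nat_numeral algebra_simps)
  qed
  have g14: "\<forall>x. ads_inner (nderiv 1 c x) (nderiv 4 c x) = 0"
  proof
    fix x show "ads_inner (nderiv 1 c x) (nderiv 4 c x) = 0"
      using gram_step[OF pc g13, where s=x] g23 by (simp add: numeral_3_eq_3 numeral_2_eq_2 eval_nat_numeral algebra_simps)
  qed
  have g24: "\<forall>x. ads_inner (nderiv 2 c x) (nderiv 4 c x) = 16 * bending c x"
  proof
    fix x show "ads_inner (nderiv 2 c x) (nderiv 4 c x) = 16 * bending c x"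
      using gram_step[OF pc g23, where s=x] by (simp add: numeral_3_eq_3 numeral_2_eq_2 eval_nat_numeral bending_def algebra_simps)
  qed
  show "ads_inner (nderiv 0 c s) (nderiv 0 c s) = -1"
    "ads_inner (nderiv 0 c s) (nderiv 1 c s) = 0"
    "ads_inner (nderiv 0 c s) (nderiv 2 c s) = 0"
    "ads_inner (nderiv 0 c s) (nderiv 3 c s) = 0"
    "ads_inner (nderiv 1 c s) (nderiv 1 c s) = 0"
    "ads_inner (nderiv 1 c s) (nderiv 2 c s) = 0"
    "ads_inner (nderiv 1 c s) (nderiv 3 c s) = -4"
    "ads_inner (nderiv 2 c s) (nderiv 2 c s) = 4"
    "ads_inner (nderiv 2 c s) (nderiv 3 c s) = 0"
    "ads_inner (nderiv 3 c s) (nderiv 3 c s) = -16 * bending c s"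
    "ads_inner (nderiv 0 c s) (nderiv 4 c s) = 4"
    "ads_inner (nderiv 1 c s) (nderiv 4 c s) = 0"
    "ads_inner (nderiv 2 c s) (nderiv 4 c s) = 16 * bending c s"
    "ads_inner (nderiv 3 c s) (nderiv 4 c s) = -8 * kd c s"
    using g00 g01 g02 g03 g11 g12 g13 g22 g23 g04 g14 g24
    by (auto simp: bending_def kd_def)
qed


lemma gram_all:
  assumes pc: "proper_null_curve c"
  shows "ads_inner (nderiv 0 c s) (nderiv 0 c s) = -1"
    "ads_inner (nderiv 0 c s) (nderiv 1 c s) = 0"
    "ads_inner (nderiv 0 c s) (nderiv 2 c s) = 0"
    "ads_inner (nderiv 0 c s) (nderiv 3 c s) = 0"
    "ads_inner (nderiv 1 c s) (nderiv 1 c s) = 0"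
    "ads_inner (nderiv 1 c s) (nderiv 2 c s) = 0"
    "ads_inner (nderiv 1 c s) (nderiv 3 c s) = -4"
    "ads_inner (nderiv 2 c s) (nderiv 2 c s) = 4"
    "ads_inner (nderiv 2 c s) (nderiv 3 c s) = 0"
    "ads_inner (nderiv 3 c s) (nderiv 3 c s) = -16 * bending c s"
    "ads_inner (nderiv 1 c s) (nderiv 0 c s) = 0"
    "ads_inner (nderiv 2 c s) (nderiv 0 c s) = 0"
    "ads_inner (nderiv 3 c s) (nderiv 0 c s) = 0"
    "ads_inner (nderiv 2 c s) (nderiv 1 c s) = 0"
    "ads_inner (nderiv 3 c s) (nderiv 1 c s) = -4"
    "ads_inner (nderiv 3 c s) (nderiv 2 c s) = 0"
  using gram[OF pc, of s] by (simp_all add: ads_sym)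

definition Emap :: "(real \<Rightarrow> mat2) \<Rightarrow> real \<Rightarrow> mat2 \<Rightarrow> mat2" where
  "Emap c s X = X$1$1 *\<^sub>R nderiv 0 c s + X$1$2 *\<^sub>R nderiv 1 c s
     + X$2$1 *\<^sub>R nderiv 2 c s + X$2$2 *\<^sub>R nderiv 3 c s"

lemma Emap_linear: "linear (Emap c s)"
  by (rule linearI) (simp_all add: Emap_def algebra_simps)

lemma nondeg:
  assumes pc: "proper_null_curve c"
    and h: "ads_inner (nderiv 0 c s) W = 0" "ads_inner (nderiv 1 c s) W = 0"
      "ads_inner (nderiv 2 c s) W = 0" "ads_inner (nderiv 3 c s) W = 0"
  shows "W = 0"
proof -
  have inj: "inj (Emap c s)"
    unfolding linear_injective_0[OF Emap_linear]
  proof (intro allI impI)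
    fix X assume e: "Emap c s X = 0"
    have "ads_inner (nderiv k c s) (Emap c s X) = 0" for k using e by (simp add: ads_lin)
    from this[of 0] this[of 1] this[of 2] this[of 3]
    have "X$1$1 = 0" "X$2$2 = 0" "X$2$1 = 0" "X$1$2 = 0"
      by (simp_all add: Emap_def ads_lin gram_all[OF pc] gram_all[OF pc, simplified])
    then show "X = 0"
      by (simp add: vec_eq_iff forall_2)
  qed
  obtain X where X: "W = Emap c s X"
    using eucl.linear_inj_imp_surj[OF Emap_linear inj] by (metis surjD)
  from h have "X$1$1 = 0" "X$2$2 = 0" "X$2$1 = 0" "X$1$2 = 0"
    by (simp_all add: X Emap_def ads_lin gram_all[OF pc] gram_all[OF pc, simplified])
  then show "W = 0" by (simp add: X Emap_def)
qed

definition Mop :: "(real \<Rightarrow> mat2) \<Rightarrow> (real \<Rightarrow> mat2) \<Rightarrow> real \<Rightarrow> real \<Rightarrow> mat2 \<Rightarrow> mat2" where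
  "Mop c d s u V = (-(ads_inner (nderiv 0 c s) V)) *\<^sub>R nderiv 0 d u
    + (bending c s * ads_inner (nderiv 1 c s) V - (1/4) * ads_inner (nderiv 3 c s) V) *\<^sub>R nderiv 1 d u
    + ((1/4) * ads_inner (nderiv 2 c s) V) *\<^sub>R nderiv 2 d u
    - ((1/4) * ads_inner (nderiv 1 c s) V) *\<^sub>R nderiv 3 d u"

lemma Mop_linear: "linear (Mop c d s u)"
  by (rule linearI) (simp_all add: Mop_def ads_lin algebra_simps)

lemma Mop_D:
  assumes pc: "proper_null_curve c"
  shows "Mop c d s u (nderiv 0 c s) = nderiv 0 d u"
    "Mop c d s u (nderiv 1 c s) = nderiv 1 d u"
    "Mop c d s u (nderiv 2 c s) = nderiv 2 d u"
    "Mop c d s u (nderiv 3 c s) = nderiv 3 d u"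
  by (simp_all add: Mop_def gram_all[OF pc] gram_all[OF pc, simplified])

lemma Mop_repro:
  assumes pc: "proper_null_curve c"
  shows "Mop c c s s V = V"
proof -
  have "V - Mop c c s s V = 0"
    by (rule nondeg[OF pc, of s]) (simp_all add: Mop_def ads_lin gram_all[OF pc] gram_all[OF pc, simplified] algebra_simps)
  then show ?thesis by simp
qed

lemma D4:
  assumes pc: "proper_null_curve c"
  shows "nderiv 4 c s = (-4) *\<^sub>R nderiv 0 c s + (2 * kd c s) *\<^sub>R nderiv 1 c s
     + (4 * bending c s) *\<^sub>R nderiv 2 c s"
proof -
  have "nderiv 4 c s - ((-4) *\<^sub>R nderiv 0 c s + (2 * kd c s) *\<^sub>R nderiv 1 c s
     + (4 * bending c s) *\<^sub>R nderiv 2 c s) = 0"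
    by (rule nondeg[OF pc, of s]) (simp_all add: ads_lin gram_all[OF pc] gram_all[OF pc, simplified] gram[OF pc] gram[OF pc, simplified])
  then show ?thesis by simp
qed


lemma shift_vd:
  assumes "(f has_vector_derivative f') (at (x + \<sigma>))"
  shows "((\<lambda>x. f (x + \<sigma>)) has_vector_derivative f') (at x)"
proof -
  have "((\<lambda>x. x + \<sigma>) has_vector_derivative 1) (at x)"
    by (auto intro!: derivative_eq_intros)
  from vector_diff_chain_at[OF this assms] show ?thesis by (simp add: o_def)
qed

lemma shift_rd:
  assumes "(f has_real_derivative f') (at (x + \<sigma>))"
  shows "((\<lambda>x. f (x + \<sigma>)) has_real_derivative f') (at x)"
  using shift_vd[of f f' x \<sigma>] assms by (simp add: has_real_derivative_iff_has_vector_derivative)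

lemma ads_V_deriv:
  assumes "(f has_vector_derivative f') (at s)"
  shows "((\<lambda>x. ads_inner (f x) V) has_real_derivative ads_inner f' V) (at s)"
  using ads_deriv[OF assms, of "\<lambda>_. V" 0] by (simp add: ads_lin)

lemma kd_periodic:
  assumes pc: "proper_null_curve c" and per: "\<forall>x. bending c (x + \<sigma>) = bending c x"
  shows "kd c (s + \<sigma>) = kd c s"
proof -
  have "((\<lambda>x. bending c (x + \<sigma>)) has_real_derivative kd c (s + \<sigma>)) (at s)"
    by (rule shift_rd) (rule bending_deriv[OF pc])
  moreover have "(\<lambda>x. bending c (x + \<sigma>)) = bending c" using per by auto
  ultimately show ?thesis using bending_deriv[OF pc, of s] DERIV_unique by metis
qed

lemma nsucs: "Suc 0 = 1" "Suc 1 = 2" "Suc 2 = 3" "Suc 3 = (4::nat)" by simp_all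

lemma Mop_s_deriv0:
  assumes pc: "proper_null_curve c" and per: "\<forall>x. bending c (x + \<sigma>) = bending c x"
  shows "((\<lambda>x. Mop c c x (x + \<sigma>) V) has_vector_derivative 0) (at s)"
proof -
  have d0: "((\<lambda>x. ads_inner (nderiv k c x) V) has_real_derivative ads_inner (nderiv (Suc k) c s) V) (at s)" for k
    by (rule ads_V_deriv) (rule proper_smooth[OF pc])
  have dh: "((\<lambda>x. nderiv k c (x + \<sigma>)) has_vector_derivative nderiv (Suc k) c (s + \<sigma>)) (at s)" for k
    by (rule shift_vd) (rule proper_smooth[OF pc])
  note db = bending_deriv[OF pc, of s]
  show ?thesis
    unfolding Mop_def
    apply (rule has_vector_derivative_eq_rhs)
     apply (rule derivative_eq_intros d0 dh db refl)+
    apply (simp only: nsucs)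
    apply (simp only: D4[OF pc, of s] D4[OF pc, of "s + \<sigma>"]
       kd_periodic[OF pc per, of s] per)
    apply (simp add: ads_lin algebra_simps)
    done
qed

lemma Mop_s_const:
  assumes pc: "proper_null_curve c" and per: "\<forall>x. bending c (x + \<sigma>) = bending c x"
  shows "Mop c c s (s + \<sigma>) V = Mop c c 0 \<sigma> V"
proof -
  have "\<exists>a. \<forall>x\<in>UNIV. Mop c c x (x + \<sigma>) V = a"
    apply (rule has_derivative_zero_constant[OF convex_UNIV])
    using Mop_s_deriv0[OF pc per] by (simp add: has_vector_derivative_def)
  then show ?thesis by (metis add_0 UNIV_I)
qed


definition MG :: "real \<Rightarrow> mat2 \<Rightarrow> mat2 \<Rightarrow> mat2 \<Rightarrow> mat2 \<Rightarrow> mat2 \<Rightarrow> mat2 \<Rightarrow> mat2 \<Rightarrow> mat2 \<Rightarrow> mat2 \<Rightarrow> mat2" where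
  "MG k a0 a1 a2 a3 b0 b1 b2 b3 V = (-(ads_inner a0 V)) *\<^sub>R b0
    + (k * ads_inner a1 V - (1/4) * ads_inner a3 V) *\<^sub>R b1
    + ((1/4) * ads_inner a2 V) *\<^sub>R b2 - ((1/4) * ads_inner a1 V) *\<^sub>R b3"

definition MGd :: "real \<Rightarrow> real \<Rightarrow> mat2 \<Rightarrow> mat2 \<Rightarrow> mat2 \<Rightarrow> mat2 \<Rightarrow> mat2 \<Rightarrow> mat2 \<Rightarrow> mat2 \<Rightarrow> mat2
   \<Rightarrow> mat2 \<Rightarrow> mat2 \<Rightarrow> mat2 \<Rightarrow> mat2 \<Rightarrow> mat2 \<Rightarrow> mat2 \<Rightarrow> mat2 \<Rightarrow> mat2 \<Rightarrow> mat2 \<Rightarrow> mat2" where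
  "MGd k k' a0 a1 a2 a3 a0' a1' a2' a3' b0 b1 b2 b3 b0' b1' b2' b3' V =
      (-(ads_inner a0' V)) *\<^sub>R b0 + (-(ads_inner a0 V)) *\<^sub>R b0'
    + (k' * ads_inner a1 V + k * ads_inner a1' V - (1/4) * ads_inner a3' V) *\<^sub>R b1
    + (k * ads_inner a1 V - (1/4) * ads_inner a3 V) *\<^sub>R b1'
    + ((1/4) * ads_inner a2' V) *\<^sub>R b2 + ((1/4) * ads_inner a2 V) *\<^sub>R b2'
    - ((1/4) * ads_inner a1' V) *\<^sub>R b3 - ((1/4) * ads_inner a1 V) *\<^sub>R b3'"

lemma Mop_MG: "Mop c d s u V = MG (bending c s) (nderiv 0 c s) (nderiv 1 c s) (nderiv 2 c s) (nderiv 3 c s)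
   (nderiv 0 d u) (nderiv 1 d u) (nderiv 2 d u) (nderiv 3 d u) V"
  by (simp add: Mop_def MG_def)

lemma MG_linear: "linear (MG k a0 a1 a2 a3 b0 b1 b2 b3)"
  by (rule linearI) (simp_all add: MG_def ads_lin algebra_simps)

lemma MGd_linear: "linear (MGd k k' a0 a1 a2 a3 a0' a1' a2' a3' b0 b1 b2 b3 b0' b1' b2' b3')"
  by (rule linearI) (simp_all add: MGd_def ads_lin algebra_simps)

lemma MG_deriv:
  assumes "(k has_real_derivative k') (at t)"
    "(a0 has_vector_derivative a0') (at t)" "(a1 has_vector_derivative a1') (at t)"
    "(a2 has_vector_derivative a2') (at t)" "(a3 has_vector_derivative a3') (at t)"
    "(b0 has_vector_derivative b0') (at t)" "(b1 has_vector_derivative b1') (at t)"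
    "(b2 has_vector_derivative b2') (at t)" "(b3 has_vector_derivative b3') (at t)"
    "(v has_vector_derivative v') (at t)"
  shows "((\<lambda>y. MG (k y) (a0 y) (a1 y) (a2 y) (a3 y) (b0 y) (b1 y) (b2 y) (b3 y) (v y))
     has_vector_derivative
      (MGd (k t) k' (a0 t) (a1 t) (a2 t) (a3 t) a0' a1' a2' a3' (b0 t) (b1 t) (b2 t) (b3 t) b0' b1' b2' b3' (v t)
       + MG (k t) (a0 t) (a1 t) (a2 t) (a3 t) (b0 t) (b1 t) (b2 t) (b3 t) v')) (at t)"
  unfolding MG_def
  apply (rule has_vector_derivative_eq_rhs)
   apply (rule derivative_eq_intros ads_deriv assms refl)+
  apply (simp add: MGd_def MG_def ads_lin algebra_simps)
  done

lemma nderiv_Suc: "nderiv (Suc k) c = vderiv (nderiv k c)"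
  by (simp add: nderiv_def)

lemma nderiv_fold:
  "nderiv k (\<lambda>x. g x t) s = foldr (\<lambda>b h. if b then pd_s h else pd_t h) (replicate k True) g s t"
proof (induction k arbitrary: s)
  case 0 then show ?case by (simp add: nderiv_def)
next
  case (Suc k)
  have "nderiv k (\<lambda>x. g x t) = (\<lambda>s. foldr (\<lambda>b h. if b then pd_s h else pd_t h) (replicate k True) g s t)"
    using Suc by auto
  then show ?case by (simp add: nderiv_Suc vderiv_def pd_s_def)
qed

lemma sm2_t:
  assumes "smooth2 I g" "t \<in> I"
  shows "((\<lambda>y. foldr (\<lambda>b h. if b then pd_s h else pd_t h) ops g s y) has_vector_derivative
            pd_t (foldr (\<lambda>b h. if b then pd_s h else pd_t h) ops g) s t) (at t)"
  using assms unfolding smooth2_def Let_def by blast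

lemma sm2_s:
  assumes "smooth2 I g" "t \<in> I"
  shows "((\<lambda>x. foldr (\<lambda>b h. if b then pd_s h else pd_t h) ops g x t) has_vector_derivative
            pd_s (foldr (\<lambda>b h. if b then pd_s h else pd_t h) ops g) s t) (at s)"
  using assms unfolding smooth2_def Let_def by blast

lemma sm2_cont:
  assumes "smooth2 I g"
  shows "continuous_on (UNIV \<times> I) (\<lambda>(s, t). foldr (\<lambda>b h. if b then pd_s h else pd_t h) ops g s t)"
  using assms unfolding smooth2_def Let_def by blast

lemma nderiv_t:
  assumes "smooth2 I g" "t \<in> I"
  shows "((\<lambda>y. nderiv k (\<lambda>x. g x y) s) has_vector_derivative
     pd_t (foldr (\<lambda>b h. if b then pd_s h else pd_t h) (replicate k True) g) s t) (at t)"
  unfolding nderiv_fold using sm2_t[OF assms] .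

lemma kappa_t:
  assumes "smooth2 I g" "t \<in> I"
  shows "((\<lambda>y. g s y) has_real_derivative pd_t g s t) (at t)"
  using sm2_t[OF assms, of "[]" s] by (simp add: has_real_derivative_iff_has_vector_derivative)


lemma lien_rhs:
  "(- 2 * sqrt 2) *\<^sub>R (k *\<^sub>R frameT c s + 2 *\<^sub>R frameB c s)
   = 2 *\<^sub>R nderiv 3 c s - (2 * k + 4 * bending c s) *\<^sub>R nderiv 1 c s"
proof -
  have r: "sqrt 2 * sqrt 2 = (2::real)" by simp
  have a: "(- 2 * sqrt 2) * (k * (1 / sqrt 2)) = - 2 * k" using r
    by (simp add: field_simps)
  have b: "(- 2 * sqrt 2) * (2 * ((1 / sqrt 2) * bending c s)) = - 4 * bending c s" using r
    by (simp add: field_simps)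
  have d: "(- 2 * sqrt 2) * (2 * (1 / (2 * sqrt 2))) = -2" using r
    by (simp add: field_simps)
  have "(- 2 * sqrt 2) *\<^sub>R (k *\<^sub>R frameT c s + 2 *\<^sub>R frameB c s)
    = ((- 2 * sqrt 2) * (k * (1 / sqrt 2))) *\<^sub>R nderiv 1 c s
      + ((- 2 * sqrt 2) * (2 * ((1 / sqrt 2) * bending c s))) *\<^sub>R nderiv 1 c s
      - ((- 2 * sqrt 2) * (2 * (1 / (2 * sqrt 2)))) *\<^sub>R nderiv 3 c s"
    unfolding frameT_def frameB_def by (simp add: algebra_simps)
  also have "\<dots> = 2 *\<^sub>R nderiv 3 c s - (2 * k + 4 * bending c s) *\<^sub>R nderiv 1 c s"
    unfolding a b d by (simp add: algebra_simps)
  finally show ?thesis .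
qed

lemma lin_zero_step:
  fixes L :: "mat2 \<Rightarrow> mat2"
  assumes L: "linear L" and pc: "proper_null_curve c" and z: "\<forall>s. L (nderiv k c s) = 0"
  shows "L (nderiv (Suc k) c s) = 0"
proof -
  have bl: "bounded_linear L" using L linear_conv_bounded_linear by blast
  have "((\<lambda>x. L (nderiv k c x)) has_vector_derivative L (nderiv (Suc k) c s)) (at s)"
    using bounded_linear.has_vector_derivative[OF bl proper_smooth[OF pc]] by simp
  moreover have "(\<lambda>x. L (nderiv k c x)) = (\<lambda>_. 0)" using z by auto
  ultimately show ?thesis using vector_derivative_unique_at has_vector_derivative_const by metis
qed

lemma lin_zero_all:
  fixes L :: "mat2 \<Rightarrow> mat2"
  assumes L: "linear L" and pc: "proper_null_curve c" and z: "\<forall>s. L (nderiv 0 c s) = 0"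
  shows "L V = 0"
proof -
  have all: "\<forall>s. L (nderiv k c s) = 0" for k
    by (induction k) (use z lin_zero_step[OF L pc] in auto)
  have "L V = L (Mop c c 0 0 V)" using Mop_repro[OF pc] by simp
  also have "\<dots> = 0"
    unfolding Mop_def using all
    by (simp add: linear_add[OF L] linear_diff[OF L] linear_scale[OF L])
  finally show ?thesis .
qed

lemma nderiv0: "nderiv 0 c = c" by (simp add: nderiv_def)

lemma time_const:
  assumes I_open: "open I" and I_int: "is_interval I"
    and kdv: "smooth2 I \<kappa>"
    and lien: "LIEN_solution I \<gamma>"
    and lien_bend: "\<forall>s. \<forall>t\<in>I. bending (\<lambda>x. \<gamma> x t) s = \<kappa> s t"
    and per: "\<forall>s. \<forall>t\<in>I. \<kappa> (s + \<sigma>) t = \<kappa> s t"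
    and t1: "t1 \<in> I" and t2: "t2 \<in> I"
  shows "Mop (\<lambda>x. \<gamma> x t1) (\<lambda>x. \<gamma> x t1) 0 \<sigma> V = Mop (\<lambda>x. \<gamma> x t2) (\<lambda>x. \<gamma> x t2) 0 \<sigma> V"
proof -
  have sm: "smooth2 I \<gamma>" using lien by (simp add: LIEN_solution_def)
  have pcy: "proper_null_curve (\<lambda>x. \<gamma> x y)" if "y \<in> I" for y
    using lien that by (simp add: LIEN_solution_def)
  have perb: "\<forall>x. bending (\<lambda>x. \<gamma> x y) (x + \<sigma>) = bending (\<lambda>x. \<gamma> x y) x" if "y \<in> I" for y
    using lien_bend per that by simp
  define A where "A k y = nderiv k (\<lambda>x. \<gamma> x y) 0" for k y
  define B where "B k y = nderiv k (\<lambda>x. \<gamma> x y) \<sigma>" for k y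
  define Mk where "Mk y = MG (\<kappa> 0 y) (A 0 y) (A 1 y) (A 2 y) (A 3 y) (B 0 y) (B 1 y) (B 2 y) (B 3 y)" for y
  have MopMk: "Mop (\<lambda>x. \<gamma> x y) (\<lambda>x. \<gamma> x y) 0 \<sigma> W = Mk y W" if "y \<in> I" for y W
    unfolding Mop_MG Mk_def A_def B_def using lien_bend that by simp
  have relk: "Mk y (nderiv k (\<lambda>x. \<gamma> x y) s) = nderiv k (\<lambda>x. \<gamma> x y) (s + \<sigma>)"
    if "y \<in> I" "k \<le> 3" for y s k
  proof -
    have "Mk y (nderiv k (\<lambda>x. \<gamma> x y) s) = Mop (\<lambda>x. \<gamma> x y) (\<lambda>x. \<gamma> x y) s (s + \<sigma>) (nderiv k (\<lambda>x. \<gamma> x y) s)"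
      using MopMk[OF that(1)] Mop_s_const[OF pcy[OF that(1)] perb[OF that(1)]] by simp
    also have "\<dots> = nderiv k (\<lambda>x. \<gamma> x y) (s + \<sigma>)"
      using that(2) Mop_D[OF pcy[OF that(1)]] by (auto simp: le_Suc_eq numeral_eq_Suc)
    finally show ?thesis .
  qed
  have rel: "\<gamma> (s + \<sigma>) y = Mk y (\<gamma> s y)" if "y \<in> I" for y s
    using relk[OF that, of 0 s] by (simp add: nderiv0)
  have deriv0: "((\<lambda>y. Mop (\<lambda>x. \<gamma> x y) (\<lambda>x. \<gamma> x y) 0 \<sigma> V) has_vector_derivative 0) (at t)"
    if t: "t \<in> I" for t
  proof -
    let ?F = "\<lambda>b h. if b then pd_s h else pd_t h"
    define Md where "Md = MGd (\<kappa> 0 t) (pd_t \<kappa> 0 t) (A 0 t) (A 1 t) (A 2 t) (A 3 t)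
      (pd_t (foldr ?F (replicate 0 True) \<gamma>) 0 t) (pd_t (foldr ?F (replicate 1 True) \<gamma>) 0 t)
      (pd_t (foldr ?F (replicate 2 True) \<gamma>) 0 t) (pd_t (foldr ?F (replicate 3 True) \<gamma>) 0 t)
      (B 0 t) (B 1 t) (B 2 t) (B 3 t)
      (pd_t (foldr ?F (replicate 0 True) \<gamma>) \<sigma> t) (pd_t (foldr ?F (replicate 1 True) \<gamma>) \<sigma> t)
      (pd_t (foldr ?F (replicate 2 True) \<gamma>) \<sigma> t) (pd_t (foldr ?F (replicate 3 True) \<gamma>) \<sigma> t)"
    have Mdl: "linear Md" unfolding Md_def by (rule MGd_linear)
    have dMk: "((\<lambda>y. Mk y (v y)) has_vector_derivative (Md (v t) + Mk t v')) (at t)"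
      if "(v has_vector_derivative v') (at t)" for v v'
      unfolding Mk_def Md_def A_def B_def
      by (rule MG_deriv kappa_t[OF kdv t] nderiv_t[OF sm t] that)+
    have lin_Mk: "linear (Mk t)" unfolding Mk_def by (rule MG_linear)
    have pdt: "((\<lambda>y. \<gamma> s y) has_vector_derivative pd_t \<gamma> s t) (at t)" for s
      using sm2_t[OF sm t, of "[]" s] by simp
    have lien_t: "pd_t \<gamma> s t = 2 *\<^sub>R nderiv 3 (\<lambda>x. \<gamma> x t) s - (6 * \<kappa> s t) *\<^sub>R nderiv 1 (\<lambda>x. \<gamma> x t) s" for s
      using lien t lien_bend lien_rhs[of "\<kappa> s t" "\<lambda>x. \<gamma> x t" s] by (simp add: LIEN_solution_def)
    have Md0: "Md (\<gamma> s t) = 0" for s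
    proof -
      have d1: "((\<lambda>y. \<gamma> (s + \<sigma>) y) has_vector_derivative (Md (\<gamma> s t) + Mk t (pd_t \<gamma> s t))) (at t)"
        by (rule has_vector_derivative_transform_within_open[OF dMk[OF pdt] I_open t])
           (simp add: rel)
      have e1: "pd_t \<gamma> (s + \<sigma>) t = Md (\<gamma> s t) + Mk t (pd_t \<gamma> s t)"
        using vector_derivative_unique_at[OF pdt d1] .
      have "Mk t (pd_t \<gamma> s t) = 2 *\<^sub>R nderiv 3 (\<lambda>x. \<gamma> x t) (s + \<sigma>) - (6 * \<kappa> s t) *\<^sub>R nderiv 1 (\<lambda>x. \<gamma> x t) (s + \<sigma>)"
        unfolding lien_t using relk[OF t, of 3 s] relk[OF t, of 1 s]
        by (simp add: linear_diff[OF lin_Mk] linear_scale[OF lin_Mk])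
      then show ?thesis using e1 lien_t[of "s + \<sigma>"] per t by simp
    qed
    have Mdz: "Md W = 0" for W
      by (rule lin_zero_all[OF Mdl pcy[OF t]]) (simp add: nderiv0 Md0)
    have "((\<lambda>y. Mk y V) has_vector_derivative 0) (at t)"
      using dMk[of "\<lambda>_. V" 0] by (simp add: Mdz linear_0[OF lin_Mk])
    then show ?thesis
      by (rule has_vector_derivative_transform_within_open[OF _ I_open t]) (simp add: MopMk)
  qed
  have cI: "convex I" using I_int by (simp add: is_interval_convex)
  have "\<exists>a. \<forall>y\<in>I. Mop (\<lambda>x. \<gamma> x y) (\<lambda>x. \<gamma> x y) 0 \<sigma> V = a"
    apply (rule has_derivative_zero_constant[OF cI])
    using deriv0 by (simp add: has_vector_derivative_def has_derivative_at_withinI)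
  then show ?thesis using t1 t2 by metis
qed


definition imc :: "real^4 \<Rightarrow> mat2" where
  "imc x = (\<chi> i j. if i = 1 then (if j = 1 then x$1 else x$2) else (if j = 1 then x$3 else x$4))"

lemma mcoords_imc: "mcoords (imc x) = x"
  by (simp add: vec_eq_iff forall_4 mcoords_def imc_def)

lemma imc_mcoords: "imc (mcoords X) = X"
  by (simp add: vec_eq_iff forall_2 mcoords_def imc_def)

lemma mcoords_linear: "linear mcoords"
  by (rule linearI) (simp_all add: vec_eq_iff mcoords_def)

lemma imc_linear: "linear imc"
  by (rule linearI) (simp_all add: vec_eq_iff imc_def)


definition fr :: "(real \<Rightarrow> mat2) \<Rightarrow> real \<Rightarrow> 4 \<Rightarrow> mat2" where
  "fr c s j = (if j = 1 then c s else if j = 2 then frameT c s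
       else if j = 3 then frameN c s else frameB c s)"

lemma cartan_fr: "cartan_frame c s = (\<chi> i j. mcoords (fr c s j) $ i)"
  by (simp add: cartan_frame_def fr_def)

definition Amat :: "(mat2 \<Rightarrow> mat2) \<Rightarrow> real^4^4" where
  "Amat L = matrix (\<lambda>x. mcoords (L (imc x)))"

lemma Amat_works:
  assumes "linear L"
  shows "Amat L *v mcoords X = mcoords (L X)"
proof -
  have "linear (\<lambda>x. mcoords (L (imc x)))"
    using linear_compose[OF linear_compose[OF imc_linear assms] mcoords_linear] by (simp add: o_def)
  from matrix_works[OF this[folded linear_matrix_vector_mul_eq], of "mcoords X"] show ?thesis
    by (simp add: Amat_def imc_mcoords)
qed

lemma mult_col: "(A :: real^4^4) ** (\<chi> i j. v j $ i) = (\<chi> i j. (A *v v j) $ i)"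
  by (simp add: vec_eq_iff matrix_matrix_mult_def matrix_vector_mult_def)

lemma frame_Mop:
  assumes pc: "proper_null_curve c" and b: "bending c u = bending c s"
  shows "Mop c c s u (fr c s j) = fr c u j"
proof -
  have L: "linear (Mop c c s u)" by (rule Mop_linear)
  have c0: "c x = nderiv 0 c x" for x by (simp add: nderiv0)
  show ?thesis
    using exhaust_4[of j]
    apply (elim disjE)
       apply (simp_all add: fr_def frameT_def frameN_def frameB_def linear_scale[OF L] linear_diff[OF L]
        Mop_D[OF pc] Mop_D[OF pc, simplified] b)
    apply (subst (1 2) c0) apply (simp add: Mop_D[OF pc])
    done
qed

lemma cartan_inv:
  assumes pc: "proper_null_curve c"
  shows "invertible (cartan_frame c s)"
proof -
  let ?F = "cartan_frame c s"
  have Fv: "?F *v x = mcoords (x$1 *\<^sub>R fr c s 1 + x$2 *\<^sub>R fr c s 2 + x$3 *\<^sub>R fr c s 3 + x$4 *\<^sub>R fr c s 4)" for x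
    unfolding linear_add[OF mcoords_linear] linear_scale[OF mcoords_linear]
    by (simp add: cartan_fr vec_eq_iff matrix_vector_mult_def sum_4 algebra_simps)
  have "inj ((*v) ?F)"
    unfolding linear_injective_0[OF matrix_vector_mul_linear]
  proof (intro allI impI)
    fix x assume "?F *v x = 0"
    then have "mcoords (x$1 *\<^sub>R fr c s 1 + x$2 *\<^sub>R fr c s 2 + x$3 *\<^sub>R fr c s 3 + x$4 *\<^sub>R fr c s 4) = mcoords 0"
      by (simp add: Fv linear_0[OF mcoords_linear])
    then have W: "x$1 *\<^sub>R fr c s 1 + x$2 *\<^sub>R fr c s 2 + x$3 *\<^sub>R fr c s 3 + x$4 *\<^sub>R fr c s 4 = 0"
      by (metis imc_mcoords)
    have c0: "c s = nderiv 0 c s" by (simp add: nderiv0)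
    have e: "ads_inner (nderiv k c s) (x$1 *\<^sub>R fr c s 1 + x$2 *\<^sub>R fr c s 2 + x$3 *\<^sub>R fr c s 3 + x$4 *\<^sub>R fr c s 4) = 0" for k
      by (simp add: W ads_lin)
    have s2: "sqrt 2 \<noteq> 0" by simp
    have x1: "x$1 = 0" using e[of 0]
      by (simp add: fr_def frameT_def frameN_def frameB_def ads_lin gram_all[OF pc] gram_all[OF pc, simplified] c0)
    have x4: "x$4 = 0" using e[of 1] s2
      by (simp add: fr_def frameT_def frameN_def frameB_def ads_lin gram_all[OF pc] gram_all[OF pc, simplified] c0)
    have x3: "x$3 = 0" using e[of 2]
      by (simp add: fr_def frameT_def frameN_def frameB_def ads_lin gram_all[OF pc] gram_all[OF pc, simplified] c0 x4)
    have x2: "x$2 = 0" using e[of 3]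
      by (simp add: fr_def frameT_def frameN_def frameB_def ads_lin gram_all[OF pc] gram_all[OF pc, simplified] c0 x4)
    show "x = 0" using x1 x2 x3 x4 by (simp add: vec_eq_iff forall_4)
  qed
  then show ?thesis
    using matrix_left_invertible_injective invertible_left_inverse by blast
qed

lemma inv_right: "invertible (A::real^4^4) \<Longrightarrow> A ** matrix_inv A = mat 1"
  unfolding invertible_def matrix_inv_def by (rule someI_ex[THEN conjunct1])

lemma monodromy_eq:
  assumes pc: "proper_null_curve c" and b: "bending c \<rho> = bending c 0"
  shows "monodromy c \<rho> = Amat (Mop c c 0 \<rho>)"
proof -
  have "cartan_frame c \<rho> = Amat (Mop c c 0 \<rho>) ** cartan_frame c 0"
    unfolding cartan_fr mult_col Amat_works[OF Mop_linear] frame_Mop[OF pc b] ..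
  then have "monodromy c \<rho> = Amat (Mop c c 0 \<rho>) ** (cartan_frame c 0 ** matrix_inv (cartan_frame c 0))"
    by (simp add: monodromy_def matrix_mul_assoc)
  then show ?thesis by (simp add: inv_right[OF cartan_inv[OF pc]])
qed


lemma per_int:
  assumes "\<forall>s. f (s + p) = f (s::real)"
  shows "f (s + of_int k * p) = f s"
proof (induction k arbitrary: s rule: int_induct[where k=0])
  case base then show ?case by simp
next
  case (step1 i)
  have "f (s + of_int (i + 1) * p) = f ((s + of_int i * p) + p)" by (simp add: algebra_simps)
  also have "\<dots> = f (s + of_int i * p)" using assms by blast
  finally show ?case using step1 by simp
next
  case (step2 i)
  have "f (s + of_int (i - 1) * p) = f (s + of_int (i - 1) * p + p)" using assms by simp
  also have "\<dots> = f (s + of_int i * p)" by (simp add: algebra_simps)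
  finally show ?case using step2 by simp
qed

lemma per_nat:
  assumes "\<forall>s. f (s + p) = f (s::real)"
  shows "f (s + of_nat k * p) = f s"
  using per_int[OF assms, of s "int k"] by simp

lemma per_diff:
  assumes "\<forall>s. f (s + p) = f (s::real)" "\<forall>s. f (s + q) = f s"
  shows "\<forall>s. f (s + (p - q)) = f s"
proof
  fix s
  have "f (s + (p - q)) = f (s - q + p)" by (simp add: algebra_simps)
  also have "\<dots> = f (s - q)" using assms(1) by simp
  also have "\<dots> = f (s - q + q)" using assms(2) by metis
  finally show "f (s + (p - q)) = f s" by simp
qed

lemma nderiv_periodic:
  assumes sm: "smooth_curve c" and per: "\<forall>x. c (x + \<sigma>) = c x"
  shows "nderiv k c (s + \<sigma>) = nderiv k c s"
proof (induction k arbitrary: s)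
  case 0 then show ?case using per by (simp add: nderiv0)
next
  case (Suc k)
  have d: "(nderiv k c has_vector_derivative nderiv (Suc k) c x) (at x)" for x
    using sm by (simp add: smooth_curve_def)
  have "((\<lambda>x. nderiv k c (x + \<sigma>)) has_vector_derivative nderiv (Suc k) c (s + \<sigma>)) (at s)"
    by (rule shift_vd) (rule d)
  moreover have "(\<lambda>x. nderiv k c (x + \<sigma>)) = nderiv k c" using Suc by auto
  ultimately show ?case using d[of s] vector_derivative_unique_at by metis
qed

lemma dichotomy:
  fixes f :: "real \<Rightarrow> real"
  assumes cont: "\<And>x. isCont f x"
    and pr: "\<forall>s. f (s + \<rho>) = f s" and pw: "\<forall>s. f (s + \<omega>) = f s"
    and rp: "\<rho> > 0" and wp: "\<omega> > 0"
    and nc: "\<not> (\<exists>a b::nat. a > 0 \<and> b > 0 \<and> real a * \<omega> = real b * \<rho>)"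
  shows "f x = f 0"
proof -
  define P where "P p \<longleftrightarrow> (\<forall>s. f (s + p) = f s)" for p
  have Pd: "P p \<Longrightarrow> P q \<Longrightarrow> P (p - q)" for p q unfolding P_def by (rule per_diff)
  have Pi: "P p \<Longrightarrow> P (of_int k * p)" for p k unfolding P_def using per_int by blast
  have small: "\<exists>p. P p \<and> 0 < p \<and> p < e" if e: "e > 0" for e
  proof (rule ccontr)
    assume "\<not> ?thesis"
    then have noP: "\<And>p. P p \<Longrightarrow> 0 < p \<Longrightarrow> e \<le> p" by (meson not_le)
    define S where "S = {p. P p \<and> 0 < p}"
    have Sne: "S \<noteq> {}" using pr rp by (auto simp: S_def P_def)
    have Sbd: "bdd_below S" unfolding S_def bdd_below_def by (rule exI[of _ 0]) auto
    define p0 where "p0 = Inf S"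
    have lower: "p0 \<le> p" if "p \<in> S" for p unfolding p0_def by (rule cInf_lower[OF that Sbd])
    have ge: "e \<le> p0" unfolding p0_def using Sne by (rule cInf_greatest) (auto simp: S_def noP)
    have p0S: "p0 \<in> S"
    proof (rule ccontr)
      assume nS: "p0 \<notin> S"
      have "p0 < p0 + e" using e by simp
      then obtain p1 where p1: "p1 \<in> S" "p1 < p0 + e"
        using cInf_less_iff[OF Sne Sbd] unfolding p0_def by blast
      have "p0 < p1" using lower[OF p1(1)] nS p1(1) by (cases "p0 = p1") auto
      then obtain p2 where p2: "p2 \<in> S" "p2 < p1"
        using cInf_less_iff[OF Sne Sbd] unfolding p0_def by blast
      have "p0 < p2" using lower[OF p2(1)] nS p2(1) by (cases "p0 = p2") auto
      have "P (p1 - p2)" using p1 p2 Pd by (auto simp: S_def)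
      then have "e \<le> p1 - p2" using noP p2 by simp
      then show False using p1 \<open>p0 < p2\<close> by simp
    qed
    have p0pos: "p0 > 0" using ge e by simp
    have mult: "\<exists>k::nat. k > 0 \<and> q = real k * p0" if q: "P q" "q > 0" for q
    proof -
      define k where "k = \<lfloor>q / p0\<rfloor>"
      define r where "r = q - of_int k * p0"
      have "of_int k \<le> q / p0" "q / p0 < of_int k + 1" unfolding k_def by linarith+
      then have r0: "0 \<le> r" "r < p0" using p0pos unfolding r_def by (auto simp: field_simps)
      have "P r" unfolding r_def using Pd[OF q(1) Pi] p0S by (auto simp: S_def)
      have "r = 0"
      proof (rule ccontr)
        assume "r \<noteq> 0"
        then have "r \<in> S" using \<open>P r\<close> r0 by (simp add: S_def)
        then show False using lower[of r] r0 by simp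
      qed
      then have qk: "q = of_int k * p0" unfolding r_def by simp
      have "0 < (of_int k :: real)" using q(2) p0pos qk by (simp add: zero_less_mult_iff)
      then have "k > 0" by simp
      then show ?thesis using qk by (intro exI[of _ "nat k"]) simp
    qed
    obtain a where a: "a > 0" "\<rho> = real a * p0" using mult[of \<rho>] pr rp by (auto simp: P_def)
    obtain b where b: "b > 0" "\<omega> = real b * p0" using mult[of \<omega>] pw wp by (auto simp: P_def)
    have "real a * \<omega> = real b * \<rho>" using a b by simp
    then show False using nc a b by blast
  qed
  show ?thesis
  proof (rule ccontr)
    assume ne: "f x \<noteq> f 0"
    define e where "e = \<bar>f x - f 0\<bar>"
    have e: "e > 0" using ne by (simp add: e_def)
    have "\<exists>d>0. \<forall>y. y \<noteq> 0 \<and> norm (y - 0) < d \<longrightarrow> norm (f y - f 0) < e"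
      using cont[of 0] e unfolding isCont_def LIM_eq by blast
    then obtain d where d0: "d > 0" and d1: "\<forall>y. y \<noteq> 0 \<and> norm (y - 0) < d \<longrightarrow> norm (f y - f 0) < e"
      by blast
    have d: "d > 0" "\<And>y. \<bar>y - 0\<bar> < d \<Longrightarrow> \<bar>f y - f 0\<bar> < e"
    proof -
      show "d > 0" by (rule d0)
      fix y :: real assume "\<bar>y - 0\<bar> < d"
      then show "\<bar>f y - f 0\<bar> < e" using d1 e by (cases "y = 0") auto
    qed
    obtain p where p: "P p" "0 < p" "p < d" using small[OF d(1)] by blast
    define k where "k = \<lfloor>x / p\<rfloor>"
    define y where "y = x - of_int k * p"
    have "of_int k \<le> x / p" "x / p < of_int k + 1" unfolding k_def by linarith+
    then have y0: "0 \<le> y" "y < p" using p unfolding y_def by (auto simp: field_simps)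
    have "f x = f (y + of_int k * p)" by (simp add: y_def)
    also have "\<dots> = f y" using per_int p(1) unfolding P_def by blast
    finally have "f x = f y" .
    moreover have "\<bar>f y - f 0\<bar> < e" using d(2)[of y] y0 p by simp
    ultimately show False by (simp add: e_def)
  qed
qed


lemma per_deriv:
  assumes "\<forall>x. g (x + \<rho>) = (g x :: real)" "\<And>x. (g has_real_derivative g' x) (at x)"
  shows "g' (s + \<rho>) = g' s"
proof -
  have "((\<lambda>x. g (x + \<rho>)) has_real_derivative g' (s + \<rho>)) (at s)"
    by (rule shift_rd) (rule assms(2))
  moreover have "(\<lambda>x. g (x + \<rho>)) = g" using assms(1) by auto
  ultimately show ?thesis using assms(2)[of s] DERIV_unique by metis
qed

lemma kdv_const:
  fixes \<kappa> :: "real \<Rightarrow> real \<Rightarrow> real"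
  assumes I_open: "open I" and I_int: "is_interval I" and I0: "0 \<in> I"
    and kdv: "KdV_solution I \<kappa>"
    and per: "\<forall>s. \<forall>t\<in>I. \<kappa> (s + \<rho>) t = \<kappa> s t" and rp: "\<rho> > 0"
    and init: "\<forall>s. \<kappa> s 0 = c"
  shows "\<forall>s. \<forall>t\<in>I. \<kappa> s t = c"
proof -
  have sm: "smooth2 I \<kappa>" using kdv by (simp add: KdV_solution_def)
  have eq: "pd_t \<kappa> s t = - pd_s (pd_s (pd_s \<kappa>)) s t + 6 * \<kappa> s t * pd_s \<kappa> s t" if "t \<in> I" for s t
    using kdv that by (simp add: KdV_solution_def algebra_simps)
  have d0: "((\<lambda>x. \<kappa> x t) has_real_derivative pd_s \<kappa> s t) (at s)" if "t \<in> I" for s t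
    using sm2_s[OF sm that, of "[]" s] by (simp add: has_real_derivative_iff_has_vector_derivative)
  have d1: "((\<lambda>x. pd_s \<kappa> x t) has_real_derivative pd_s (pd_s \<kappa>) s t) (at s)" if "t \<in> I" for s t
    using sm2_s[OF sm that, of "[True]" s] by (simp add: has_real_derivative_iff_has_vector_derivative)
  have d2: "((\<lambda>x. pd_s (pd_s \<kappa>) x t) has_real_derivative pd_s (pd_s (pd_s \<kappa>)) s t) (at s)" if "t \<in> I" for s t
    using sm2_s[OF sm that, of "[True, True]" s] by (simp add: has_real_derivative_iff_has_vector_derivative)
  have dt: "((\<lambda>y. \<kappa> s y) has_real_derivative pd_t \<kappa> s t) (at t)" if "t \<in> I" for s t
    using kappa_t[OF sm that] .
  have c0: "continuous_on (UNIV \<times> I) (\<lambda>(s, t). \<kappa> s t)"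
    using sm2_cont[OF sm, of "[]"] by simp
  have c1: "continuous_on (UNIV \<times> I) (\<lambda>(s, t). pd_t \<kappa> s t)"
    using sm2_cont[OF sm, of "[False]"] by simp
  have p1: "pd_s \<kappa> (s + \<rho>) t = pd_s \<kappa> s t" if "t \<in> I" for s t
    by (rule per_deriv[of "\<lambda>x. \<kappa> x t"]) (use per that d0[OF that] in auto)
  have p2: "pd_s (pd_s \<kappa>) (s + \<rho>) t = pd_s (pd_s \<kappa>) s t" if "t \<in> I" for s t
    by (rule per_deriv[of "\<lambda>x. pd_s \<kappa> x t"]) (use p1 that d1[OF that] in auto)
  define H where "H s t = -2 * (\<kappa> s t - c) * pd_s (pd_s \<kappa>) s t + (pd_s \<kappa> s t)^2
      + 4 * (\<kappa> s t - c)^3 + 6 * c * (\<kappa> s t - c)^2" for s t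
  have int0: "((\<lambda>s. 2 * (\<kappa> s t - c) * pd_t \<kappa> s t) has_integral 0) {0..\<rho>}" if t: "t \<in> I" for t
  proof -
    have "((\<lambda>s. 2 * (\<kappa> s t - c) * pd_t \<kappa> s t) has_integral (H \<rho> t - H 0 t)) {0..\<rho>}"
    proof (rule fundamental_theorem_of_calculus)
      show "0 \<le> \<rho>" using rp by simp
      fix x assume "x \<in> {0..\<rho>}"
      have "((\<lambda>s. H s t) has_real_derivative 2 * (\<kappa> x t - c) * pd_t \<kappa> x t) (at x)"
        unfolding H_def eq[OF t]
        apply (rule DERIV_cong)
         apply (rule derivative_eq_intros d0[OF t] d1[OF t] d2[OF t] refl)+
        apply (simp add: algebra_simps power2_eq_square power3_eq_cube)
        done
      then show "((\<lambda>s. H s t) has_vector_derivative 2 * (\<kappa> x t - c) * pd_t \<kappa> x t) (at x within {0..\<rho>})"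
        by (simp add: has_real_derivative_iff_has_vector_derivative has_vector_derivative_at_within)
    qed
    moreover have "H \<rho> t = H 0 t"
    proof -
      have "\<kappa> \<rho> t = \<kappa> 0 t" using per t by (metis add_0)
      then show ?thesis using p1[OF t, of 0] p2[OF t, of 0] by (simp add: H_def)
    qed
    ultimately show ?thesis by simp
  qed
  define E where "E t = integral {0..\<rho>} (\<lambda>s. (\<kappa> s t - c)^2)" for t
  have contk: "continuous_on {0..\<rho>} (\<lambda>s. \<kappa> s t)" if "t \<in> I" for t
    by (rule continuous_at_imp_continuous_on) (use DERIV_isCont[OF d0[OF that]] in auto)
  have Ed: "(E has_field_derivative 0) (at t within I)" if t: "t \<in> I" for t
  proof -
    have "(E has_field_derivative integral (cbox 0 \<rho>) (\<lambda>s. 2 * (\<kappa> s t - c) * pd_t \<kappa> s t)) (at t within I)"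
      unfolding E_def cbox_interval[symmetric]
    proof (rule leibniz_rule_field_derivative[where fx = "\<lambda>t s. 2 * (\<kappa> s t - c) * pd_t \<kappa> s t"])
      fix x s assume x: "x \<in> I" and "s \<in> cbox 0 \<rho>"
      show "((\<lambda>x. (\<kappa> s x - c)\<^sup>2) has_field_derivative 2 * (\<kappa> s x - c) * pd_t \<kappa> s x) (at x within I)"
        apply (rule has_field_derivative_at_within)
        apply (rule DERIV_cong)
         apply (rule derivative_eq_intros dt[OF x] refl)+
        apply simp
        done
    next
      fix x assume x: "x \<in> I"
      show "(\<lambda>s. (\<kappa> s x - c)\<^sup>2) integrable_on cbox 0 \<rho>"
        unfolding cbox_interval
        by (rule integrable_continuous_interval) (intro continuous_intros contk[OF x])
    next
      have sw: "continuous_on (I \<times> cbox 0 \<rho>) (\<lambda>(x::real, s::real). (s, x))"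
        unfolding split_beta by (intro continuous_intros)
      have img: "(\<lambda>(x::real, s::real). (s, x)) ` (I \<times> cbox 0 \<rho>) \<subseteq> UNIV \<times> I" by auto
      have "continuous_on (UNIV \<times> I) (\<lambda>p. 2 * ((\<lambda>(s, t). \<kappa> s t) p - c) * (\<lambda>(s, t). pd_t \<kappa> s t) p)"
        by (intro continuous_intros c0 c1)
      from continuous_on_compose2[OF this sw img]
      show "continuous_on (I \<times> cbox 0 \<rho>) (\<lambda>(x, s). 2 * (\<kappa> s x - c) * pd_t \<kappa> s x)"
        by (simp add: case_prod_unfold)
    next
      show "t \<in> I" by (rule t)
      show "convex I" using I_int by (simp add: is_interval_convex)
    qed
    moreover have "integral (cbox 0 \<rho>) (\<lambda>s. 2 * (\<kappa> s t - c) * pd_t \<kappa> s t) = 0"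
      using int0[OF t] by (simp add: cbox_interval integral_unique)
    ultimately show ?thesis by simp
  qed
  have cI: "convex I" using I_int by (simp add: is_interval_convex)
  obtain C where C: "\<forall>t\<in>I. E t = C" using has_field_derivative_zero_constant[OF cI Ed] by blast
  have E0: "E 0 = 0" unfolding E_def using init by simp
  have onI: "\<kappa> s t = c" if t: "t \<in> I" and s: "s \<in> {0..\<rho>}" for s t
  proof -
    have "E t = 0" using C E0 I0 t by metis
    moreover have "(\<lambda>s. (\<kappa> s t - c)^2) integrable_on {0..\<rho>}"
      by (rule integrable_continuous_interval) (intro continuous_intros contk[OF t])
    ultimately have hi: "((\<lambda>s. (\<kappa> s t - c)^2) has_integral 0) (cbox 0 \<rho>)"
      unfolding E_def cbox_interval using integrable_integral by fastforce
    have "(\<kappa> s t - c)^2 = 0"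
      apply (rule has_integral_0_cbox_imp_0[OF _ _ hi])
      using rp s by (auto simp: cbox_interval intro!: continuous_intros contk[OF t])
    then show ?thesis by simp
  qed
  show ?thesis
  proof (intro allI ballI)
    fix s t assume t: "t \<in> I"
    define k where "k = \<lfloor>s / \<rho>\<rfloor>"
    define y where "y = s - of_int k * \<rho>"
    have "of_int k \<le> s / \<rho>" "s / \<rho> < of_int k + 1" unfolding k_def by linarith+
    then have y0: "0 \<le> y" "y < \<rho>" using rp unfolding y_def by (auto simp: field_simps)
    have "\<kappa> s t = \<kappa> (y + of_int k * \<rho>) t" by (simp add: y_def)
    also have "\<dots> = \<kappa> y t" using per_int[of "\<lambda>x. \<kappa> x t"] per t by blast
    also have "\<dots> = c" using onI[OF t] y0 by simp
    finally show "\<kappa> s t = c" .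
  qed
qed

theorem mainTheorem3:
  fixes \<gamma>o :: "real \<Rightarrow> mat2"
    and \<rho> :: real
    and I :: "real set"
    and \<kappa> :: "real \<Rightarrow> real \<Rightarrow> real"
    and \<gamma> :: "real \<Rightarrow> real \<Rightarrow> mat2"
  assumes curve: "proper_null_curve \<gamma>o"
    and closed: "\<exists>\<omega>>0. \<forall>s. \<gamma>o (s + \<omega>) = \<gamma>o s"
    and rho_pos: "\<rho> > 0"
    and bend_per: "\<forall>s. bending \<gamma>o (s + \<rho>) = bending \<gamma>o s"
    and I_open: "open I" and I_interval: "is_interval I" and I_zero: "0 \<in> I"
    and kdv: "KdV_solution I \<kappa>"
    and kdv_init: "\<forall>s. \<kappa> s 0 = bending \<gamma>o s"
    and kdv_per: "\<forall>s. \<forall>t\<in>I. \<kappa> (s + \<rho>) t = \<kappa> s t"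
    and lien: "LIEN_solution I \<gamma>"
    and lien_bend: "\<forall>s. \<forall>t\<in>I. bending (\<lambda>x. \<gamma> x t) s = \<kappa> s t"
    and lien_init: "\<forall>s. \<gamma> s 0 = \<gamma>o s"
  shows "(\<forall>t\<in>I. \<exists>\<omega>>0. \<forall>s. \<gamma> (s + \<omega>) t = \<gamma> s t) \<and>
         (\<forall>t\<in>I. monodromy (\<lambda>s. \<gamma> s t) \<rho> = monodromy (\<lambda>s. \<gamma> s 0) \<rho>)"
proof -
  have sm: "smooth2 I \<kappa>" using kdv by (simp add: KdV_solution_def)
  have pcy: "proper_null_curve (\<lambda>x. \<gamma> x t)" if "t \<in> I" for t
    using lien that by (simp add: LIEN_solution_def)
  have sl0: "(\<lambda>x. \<gamma> x 0) = \<gamma>o" using lien_init by auto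
  have mono: "monodromy (\<lambda>s. \<gamma> s t) \<rho> = monodromy (\<lambda>s. \<gamma> s 0) \<rho>" if t: "t \<in> I" for t
  proof -
    have b: "bending (\<lambda>x. \<gamma> x y) \<rho> = bending (\<lambda>x. \<gamma> x y) 0" if "y \<in> I" for y
      using lien_bend kdv_per that by (metis add_0)
    have "Mop (\<lambda>x. \<gamma> x t) (\<lambda>x. \<gamma> x t) 0 \<rho> = Mop (\<lambda>x. \<gamma> x 0) (\<lambda>x. \<gamma> x 0) 0 \<rho>"
      by (rule ext, rule time_const[OF I_open I_interval sm lien lien_bend kdv_per t I_zero])
    then show ?thesis
      using monodromy_eq[OF pcy[OF t] b[OF t]] monodromy_eq[OF pcy[OF I_zero] b[OF I_zero]] by simp
  qed
  have percl: "\<forall>t\<in>I. \<exists>\<omega>>0. \<forall>s. \<gamma> (s + \<omega>) t = \<gamma> s t"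
    if sp: "\<sigma> > 0" and kp: "\<forall>s. \<forall>t\<in>I. \<kappa> (s + \<sigma>) t = \<kappa> s t" and gp: "\<forall>s. \<gamma>o (s + \<sigma>) = \<gamma>o s" for \<sigma>
  proof (intro ballI exI[of _ \<sigma>] conjI allI sp)
    fix t s assume t: "t \<in> I"
    have perb: "\<forall>x. bending (\<lambda>x. \<gamma> x t) (x + \<sigma>) = bending (\<lambda>x. \<gamma> x t) x"
      using lien_bend kp t by simp
    have smo: "smooth_curve \<gamma>o" using curve by (simp add: proper_null_curve_def)
    have "\<gamma> (s + \<sigma>) t = Mop (\<lambda>x. \<gamma> x t) (\<lambda>x. \<gamma> x t) s (s + \<sigma>) (nderiv 0 (\<lambda>x. \<gamma> x t) s)"
      using Mop_D(1)[OF pcy[OF t]] by (simp add: nderiv0)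
    also have "\<dots> = Mop (\<lambda>x. \<gamma> x t) (\<lambda>x. \<gamma> x t) 0 \<sigma> (\<gamma> s t)"
      using Mop_s_const[OF pcy[OF t] perb] by (simp add: nderiv0)
    also have "\<dots> = Mop (\<lambda>x. \<gamma> x 0) (\<lambda>x. \<gamma> x 0) 0 \<sigma> (\<gamma> s t)"
      by (rule time_const[OF I_open I_interval sm lien lien_bend kp t I_zero])
    also have "\<dots> = Mop \<gamma>o \<gamma>o 0 0 (\<gamma> s t)"
      unfolding sl0 Mop_def using nderiv_periodic[OF smo gp, of _ 0] by simp
    also have "\<dots> = \<gamma> s t" by (rule Mop_repro[OF curve])
    finally show "\<gamma> (s + \<sigma>) t = \<gamma> s t" .
  qed
  obtain \<omega> where wp: "\<omega> > 0" and gw: "\<forall>s. \<gamma>o (s + \<omega>) = \<gamma>o s" using closed by blast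
  have smo: "smooth_curve \<gamma>o" using curve by (simp add: proper_null_curve_def)
  have fw: "\<forall>s. bending \<gamma>o (s + \<omega>) = bending \<gamma>o s"
    unfolding bending_def using nderiv_periodic[OF smo gw] by simp
  have per_part: "\<forall>t\<in>I. \<exists>\<omega>>0. \<forall>s. \<gamma> (s + \<omega>) t = \<gamma> s t"
  proof (cases "\<exists>a b::nat. a > 0 \<and> b > 0 \<and> real a * \<omega> = real b * \<rho>")
    case True
    then obtain a b :: nat where ab: "a > 0" "b > 0" "real a * \<omega> = real b * \<rho>" by blast
    show ?thesis
    proof (rule percl[of "real a * \<omega>"])
      show "real a * \<omega> > 0" using ab(1) wp by simp
      show "\<forall>s. \<forall>t\<in>I. \<kappa> (s + real a * \<omega>) t = \<kappa> s t"
      proof (intro allI ballI)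
        fix s t assume t: "t \<in> I"
        have "\<forall>s. \<kappa> (s + \<rho>) t = \<kappa> s t" using kdv_per t by blast
        from per_nat[OF this, of s b] show "\<kappa> (s + real a * \<omega>) t = \<kappa> s t" using ab by simp
      qed
      show "\<forall>s. \<gamma>o (s + real a * \<omega>) = \<gamma>o s" using per_nat[OF gw] by blast
    qed
  next
    case False
    have cont: "isCont (bending \<gamma>o) x" for x using DERIV_isCont[OF bending_deriv[OF curve]] .
    have fc: "bending \<gamma>o x = bending \<gamma>o 0" for x
      by (rule dichotomy[OF cont bend_per fw rho_pos wp False])
    have kc: "\<forall>s. \<forall>t\<in>I. \<kappa> s t = bending \<gamma>o 0"
      by (rule kdv_const[OF I_open I_interval I_zero kdv kdv_per rho_pos]) (use kdv_init fc in simp)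
    show ?thesis
      by (rule percl[OF wp _ gw]) (use kc in simp)
  qed
  show ?thesis using per_part mono by blast
qed

end
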